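(* Let $K,\Delta K\in\mathbb{R}^{(m+n)\times(m+n)}$ be symmetric, suppose $K+\Delta K=\widetilde LJ_{m+n}\widetilde L^T$ is a generalized Cholesky factorization, and suppose $|\Delta K|\le\varepsilon|\widetilde L||\widetilde L^T|$ entrywise for some $\varepsilon\ge0$ with $\mathrm{cond}_F(\widetilde L)\,\mathrm{cond}_F(\widetilde L^{-T})\,\varepsilon<\tfrac12$. Then $K$ has a generalized Cholesky factorization $K=LJ_{m+n}L^T$ such that, with $\Delta L=\widetilde L-L$, $$\|\widetilde L^{-1}\Delta L\|_F\le\frac{1}{\sqrt2}\left(1-\sqrt{1-2\,\mathrm{cond}_F(\widetilde L)\,\mathrm{cond}_F(\widetilde L^{-T})\,\varepsilon}\right).$$
   Context: $J_{m+n}=\begin{bmatrix} I_m&0\\0&-I_n\end{bmatrix}$. A generalized Cholesky factorization of $M\in\mathbb{R}^{(m+n)\times(m+n)}$ is $M=LJ_{m+n}L^T$ with $L=\begin{bmatrix}L_{11}&0\\L_{21}&L_{22}\end{bmatrix}$, $L_{11}\in\mathbb{R}^{m\times m}$, $L_{22}\in\mathbb{R}^{n\times n}$ nonsingular lower triangular, $L_{21}\in\mathbb{R}^{n\times m}$. For $X=(x_{ij})$, $|X|=(|x_{ij}|)$; matrix inequalities are entrywise. For nonsingular $X$, $\mathrm{cond}_F(X)=\|\,|X^{-1}|\,|X|\,\|_F$, and $\widetilde L^{-T}=(\widetilde L^{-1})^T$. $\|\cdot\|_F$ is the Frobenius norm. *)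

theory Defs
  imports "Jordan_Normal_Form.Determinant"
begin

definition Jmat :: "nat \<Rightarrow> nat \<Rightarrow> real mat" where
  "Jmat m n = four_block_mat (1\<^sub>m m) (0\<^sub>m m n) (0\<^sub>m n m) (- 1\<^sub>m n)"

definition lower_tri :: "real mat \<Rightarrow> bool" where
  "lower_tri A \<longleftrightarrow> (\<forall>i<dim_row A. \<forall>j<dim_col A. i < j \<longrightarrow> A $$ (i,j) = 0)"

definition gen_chol_factor :: "nat \<Rightarrow> nat \<Rightarrow> real mat \<Rightarrow> bool" where
  "gen_chol_factor m n L \<longleftrightarrow>
     L \<in> carrier_mat (m+n) (m+n) \<and>
     (\<exists>L11 L21 L22.
        L11 \<in> carrier_mat m m \<and> L21 \<in> carrier_mat n m \<and> L22 \<in> carrier_mat n n \<and>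
        lower_tri L11 \<and> lower_tri L22 \<and> det L11 \<noteq> 0 \<and> det L22 \<noteq> 0 \<and>
        L = four_block_mat L11 (0\<^sub>m m n) L21 L22)"

definition is_gen_chol :: "nat \<Rightarrow> nat \<Rightarrow> real mat \<Rightarrow> real mat \<Rightarrow> bool" where
  "is_gen_chol m n M L \<longleftrightarrow> gen_chol_factor m n L \<and> M = L * Jmat m n * transpose_mat L"

definition abs_mat :: "real mat \<Rightarrow> real mat" where
  "abs_mat A = map_mat abs A"

definition frob_norm :: "real mat \<Rightarrow> real" where
  "frob_norm A = sqrt (\<Sum>i<dim_row A. \<Sum>j<dim_col A. (A $$ (i,j))\<^sup>2)"

definition mat_inv :: "real mat \<Rightarrow> real mat" where
  "mat_inv A = (SOME B. B \<in> carrier_mat (dim_row A) (dim_row A) \<and> inverts_mat A B \<and> inverts_mat B A)"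

definition condF :: "real mat \<Rightarrow> real" where
  "condF X = frob_norm (abs_mat (mat_inv X) * abs_mat X)"

end

theory Submission
  imports Defs "HOL-Analysis.L2_Norm"
begin


definition nf :: "nat \<Rightarrow> (nat \<times> nat \<Rightarrow> real) \<Rightarrow> real" where
  "nf N Y = L2_set Y ({..<N} \<times> {..<N})"

definition bil :: "nat \<Rightarrow> (nat \<Rightarrow> real) \<Rightarrow> (nat \<times> nat \<Rightarrow> real) \<Rightarrow> (nat \<times> nat \<Rightarrow> real) \<Rightarrow> nat \<times> nat \<Rightarrow> real" where
  "bil N s A C = (\<lambda>(i,j). \<Sum>l<N. A (i,l) * s l * C (j,l))"

definition low :: "(nat \<times> nat \<Rightarrow> real) \<Rightarrow> nat \<times> nat \<Rightarrow> real" where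
  "low G = (\<lambda>(i,j). if j < i then G (i,j) else if i = j then G (i,j) / 2 else 0)"

definition symm :: "nat \<Rightarrow> (nat \<times> nat \<Rightarrow> real) \<Rightarrow> bool" where
  "symm N G \<longleftrightarrow> (\<forall>i<N. \<forall>j<N. G (i,j) = G (j,i))"

lemma nf_sq: "(nf N Y)\<^sup>2 = (\<Sum>p\<in>{..<N} \<times> {..<N}. (Y p)\<^sup>2)"
  unfolding nf_def L2_set_def by (simp add: sum_nonneg)

lemma nf_sq2: "(nf N Y)\<^sup>2 = (\<Sum>i<N. \<Sum>j<N. (Y (i,j))\<^sup>2)"
  unfolding nf_sq by (simp add: sum.cartesian_product)

lemma nf_nonneg: "0 \<le> nf N Y" unfolding nf_def by simp

lemma nf_cong: "(\<And>i j. i < N \<Longrightarrow> j < N \<Longrightarrow> Y (i,j) = Z (i,j)) \<Longrightarrow> nf N Y = nf N Z"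
  unfolding nf_def by (rule L2_set_cong) auto

lemma nf_le_sq: assumes "(nf N Y)\<^sup>2 \<le> (c::real)\<^sup>2" "0 \<le> c" shows "nf N Y \<le> c"
  using assms nf_nonneg by (meson power2_le_imp_le)

lemma nf_entry: "i < N \<Longrightarrow> j < N \<Longrightarrow> \<bar>Y (i,j)\<bar> \<le> nf N Y"
proof -
  assume "i < N" "j < N"
  hence "(\<lambda>p. \<bar>Y p\<bar>) (i,j) \<le> L2_set (\<lambda>p. \<bar>Y p\<bar>) ({..<N} \<times> {..<N})"
    by (intro member_le_L2_set) auto
  also have "L2_set (\<lambda>p. \<bar>Y p\<bar>) ({..<N} \<times> {..<N}) = nf N Y"
    unfolding nf_def L2_set_def by simp
  finally show ?thesis by simp
qed

lemma nf_triangle: "nf N (\<lambda>p. Y p + Z p) \<le> nf N Y + nf N Z"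
  unfolding nf_def by (rule L2_set_triangle_ineq)

lemma nf_zero[simp]: "nf N (\<lambda>p. 0) = 0"
  unfolding nf_def L2_set_def by simp

lemma sum_swap_prod: "(\<Sum>p\<in>{..<N} \<times> {..<N}. f (snd p, fst p)) = (\<Sum>p\<in>{..<N} \<times> {..<N}. (f p :: real))"
  by (rule sum.reindex_bij_witness[of _ prod.swap prod.swap]) auto

lemma low_bound: assumes "symm N G" shows "nf N (low G) \<le> nf N G / sqrt 2"
proof -
  let ?S = "{..<N} \<times> {..<N}"
  have pw: "(low G p)\<^sup>2 + (low G (snd p, fst p))\<^sup>2 \<le> (G p)\<^sup>2" if "p \<in> ?S" for p
  proof -
    obtain i j where p: "p = (i,j)" by (cases p)
    with that have ij: "i < N" "j < N" by auto
    have sy: "G (j,i) = G (i,j)" using assms ij unfolding symm_def by auto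
    consider "j < i" | "i = j" | "i < j" by linarith
    thus ?thesis
    proof cases
      case 1 thus ?thesis unfolding p low_def by simp
    next
      case 2 thus ?thesis unfolding p low_def by (simp add: power_divide)
    next
      case 3 thus ?thesis unfolding p low_def using sy by simp
    qed
  qed
  have "2 * (nf N (low G))\<^sup>2 = (\<Sum>p\<in>?S. (low G p)\<^sup>2) + (\<Sum>p\<in>?S. (low G (snd p, fst p))\<^sup>2)"
    unfolding nf_sq using sum_swap_prod[where f="\<lambda>p. (low G p)\<^sup>2" and N=N] by simp
  also have "\<dots> = (\<Sum>p\<in>?S. (low G p)\<^sup>2 + (low G (snd p, fst p))\<^sup>2)"
    by (simp add: sum.distrib)
  also have "\<dots> \<le> (\<Sum>p\<in>?S. (G p)\<^sup>2)" by (rule sum_mono) (rule pw)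
  also have "\<dots> = (nf N G)\<^sup>2" unfolding nf_sq ..
  finally have h: "2 * (nf N (low G))\<^sup>2 \<le> (nf N G)\<^sup>2" .
  have "(nf N (low G))\<^sup>2 \<le> (nf N G / sqrt 2)\<^sup>2"
    using h by (simp add: power_divide)
  thus ?thesis by (rule nf_le_sq) (simp add: nf_nonneg)
qed

lemma cs_sum: "(\<Sum>l\<in>A. a l * b l)\<^sup>2 \<le> (\<Sum>l\<in>A. (a l)\<^sup>2) * (\<Sum>l\<in>A. (b l :: real)\<^sup>2)"
proof -
  have "\<bar>\<Sum>l\<in>A. a l * b l\<bar> \<le> (\<Sum>l\<in>A. \<bar>a l\<bar> * \<bar>b l\<bar>)"
    unfolding abs_mult[symmetric] by (rule sum_abs)
  also have "\<dots> \<le> L2_set a A * L2_set b A" by (rule L2_set_mult_ineq)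
  finally have h: "\<bar>\<Sum>l\<in>A. a l * b l\<bar> \<le> L2_set a A * L2_set b A" .
  have "(\<Sum>l\<in>A. a l * b l)\<^sup>2 = \<bar>\<Sum>l\<in>A. a l * b l\<bar>\<^sup>2" by simp
  also have "\<dots> \<le> (L2_set a A * L2_set b A)\<^sup>2"
    using h by (intro power_mono) auto
  also have "\<dots> = (\<Sum>l\<in>A. (a l)\<^sup>2) * (\<Sum>l\<in>A. (b l)\<^sup>2)"
    unfolding power_mult_distrib L2_set_def by (simp add: sum_nonneg)
  finally show ?thesis .
qed

lemma bil_bound: assumes s: "\<And>l. \<bar>s l\<bar> = 1"
  shows "nf N (bil N s A C) \<le> nf N A * nf N C"
proof -
  have pw: "(bil N s A C (i,j))\<^sup>2 \<le> (\<Sum>l<N. (A (i,l))\<^sup>2) * (\<Sum>l<N. (C (j,l))\<^sup>2)" for i j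
  proof -
    have "(bil N s A C (i,j))\<^sup>2 = (\<Sum>l<N. (A (i,l) * s l) * C (j,l))\<^sup>2"
      unfolding bil_def by simp
    also have "\<dots> \<le> (\<Sum>l<N. (A (i,l) * s l)\<^sup>2) * (\<Sum>l<N. (C (j,l))\<^sup>2)" by (rule cs_sum)
    also have "(\<Sum>l<N. (A (i,l) * s l)\<^sup>2) = (\<Sum>l<N. (A (i,l))\<^sup>2)"
    proof (rule sum.cong)
      fix l have "(s l)\<^sup>2 = 1" using s[of l] by (metis power2_abs power_one)
      thus "(A (i,l) * s l)\<^sup>2 = (A (i,l))\<^sup>2" by (simp add: power_mult_distrib)
    qed simp
    finally show ?thesis .
  qed
  have "(nf N (bil N s A C))\<^sup>2 \<le> (\<Sum>i<N. \<Sum>j<N. (\<Sum>l<N. (A (i,l))\<^sup>2) * (\<Sum>l<N. (C (j,l))\<^sup>2))"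
    unfolding nf_sq2 by (intro sum_mono pw)
  also have "\<dots> = (\<Sum>i<N. \<Sum>l<N. (A (i,l))\<^sup>2) * (\<Sum>j<N. \<Sum>l<N. (C (j,l))\<^sup>2)"
    by (simp add: sum_product)
  also have "\<dots> = (nf N A * nf N C)\<^sup>2" unfolding power_mult_distrib nf_sq2 ..
  finally show ?thesis by (rule nf_le_sq) (simp add: nf_nonneg)
qed

lemma low_diff: "low F p - low H p = low (\<lambda>q. F q - H q) p"
  unfolding low_def by (cases p) (auto simp: diff_divide_distrib)

lemma bil_diff: "bil N s Y1 Y1 p - bil N s Y2 Y2 p
   = bil N s Y1 (\<lambda>q. Y1 q - Y2 q) p + bil N s (\<lambda>q. Y1 q - Y2 q) Y2 p"
proof -
  obtain i j where p: "p = (i,j)" by (cases p)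
  show ?thesis unfolding p bil_def
    by (simp add: sum_subtractf[symmetric] sum.distrib[symmetric] algebra_simps)
qed

lemma bil_symm: "symm N (bil N s Y Y)"
  unfolding symm_def bil_def by (auto intro!: sum.cong)



lemma geom_conv:
  fixes a :: "nat \<Rightarrow> real"
  assumes d: "\<And>k. \<bar>a (Suc k) - a k\<bar> \<le> C * q^k" and q: "0 \<le> q" "q < 1"
  shows "convergent a"
proof -
  let ?d = "\<lambda>i. a (Suc i) - a i"
  have sg: "summable (\<lambda>k. C * q^k)"
    using q by (intro summable_mult summable_geometric) simp
  have "summable ?d"
    by (rule summable_comparison_test'[OF sg, of 0]) (use d in simp)
  hence "(\<lambda>n. \<Sum>i<n. ?d i) \<longlonglongrightarrow> suminf ?d" by (rule summable_LIMSEQ)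
  hence "(\<lambda>n. a 0 + (\<Sum>i<n. ?d i)) \<longlonglongrightarrow> a 0 + suminf ?d" by (intro tendsto_add) auto
  moreover have "(\<lambda>n. a 0 + (\<Sum>i<n. ?d i)) = a" by (rule ext) (simp add: sum_lessThan_telescope)
  ultimately show ?thesis unfolding convergent_def by auto
qed

lemma fixed_point:
  assumes sy: "symm N G" and gG: "nf N G \<le> g" and g0: "0 \<le> g" and g1: "g < 1/2"
    and s: "\<And>l. \<bar>s l\<bar> = 1"
  shows "\<exists>Y. (\<forall>i<N. \<forall>j<N. Y (i,j) = low (\<lambda>p. G p + bil N s Y Y p) (i,j))
             \<and> nf N Y \<le> (1 - sqrt (1 - 2*g)) / sqrt 2"
proof -
  define t where "t = sqrt (1 - 2*g)"
  define r where "r = (1 - t) / sqrt 2"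
  define q where "q = 1 - t"
  have t0: "0 < t" "t \<le> 1" using g0 g1 unfolding t_def by auto
  have tsq: "t\<^sup>2 = 1 - 2*g" using g1 unfolding t_def by simp
  have r0: "0 \<le> r" using t0 unfolding r_def by simp
  have q01: "0 \<le> q" "q < 1" using t0 unfolding q_def by auto
  have s2: "sqrt 2 * sqrt 2 = (2::real)" by simp
  have req: "(g + r * r) / sqrt 2 = r"
  proof -
    have "r * r = (1 - t)\<^sup>2 / 2" unfolding r_def by (simp add: power2_eq_square)
    hence "g + r * r = (1 - t) " using tsq by (simp add: power2_eq_square algebra_simps)
    thus ?thesis unfolding r_def by simp
  qed
  have qr: "2 * r / sqrt 2 = q"
  proof -
    have "2 * r / sqrt 2 = (1 - t) * (2 / (sqrt 2 * sqrt 2))" unfolding r_def by simp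
    also have "\<dots> = q" unfolding q_def by simp
    finally show ?thesis .
  qed
  define \<Phi> where "\<Phi> Y = low (\<lambda>p. G p + bil N s Y Y p)" for Y
  have symsum: "symm N (\<lambda>p. G p + bil N s Y Y p)" for Y
    using sy bil_symm[of N s Y] unfolding symm_def by auto
  have ball: "nf N (\<Phi> Y) \<le> r" if "nf N Y \<le> r" for Y
  proof -
    have "nf N (\<Phi> Y) \<le> nf N (\<lambda>p. G p + bil N s Y Y p) / sqrt 2"
      unfolding \<Phi>_def by (rule low_bound[OF symsum])
    also have "\<dots> \<le> (nf N G + nf N Y * nf N Y) / sqrt 2"
      by (intro divide_right_mono order_trans[OF nf_triangle] add_left_mono bil_bound s) auto
    also have "\<dots> \<le> (g + r * r) / sqrt 2"
      by (intro divide_right_mono add_mono gG mult_mono that nf_nonneg r0) auto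
    finally show ?thesis using req by simp
  qed
  have contr: "nf N (\<lambda>p. \<Phi> Y1 p - \<Phi> Y2 p) \<le> q * nf N (\<lambda>p. Y1 p - Y2 p)"
    if h1: "nf N Y1 \<le> r" and h2: "nf N Y2 \<le> r" for Y1 Y2
  proof -
    define D where "D = (\<lambda>p. Y1 p - Y2 p)"
    define H where "H = (\<lambda>p. bil N s Y1 D p + bil N s D Y2 p)"
    have HH: "H p = bil N s Y1 Y1 p - bil N s Y2 Y2 p" for p
      unfolding H_def D_def by (rule bil_diff[symmetric])
    have eq: "(\<lambda>p. \<Phi> Y1 p - \<Phi> Y2 p) = low H"
    proof
      fix p
      have "\<Phi> Y1 p - \<Phi> Y2 p = low (\<lambda>p. (G p + bil N s Y1 Y1 p) - (G p + bil N s Y2 Y2 p)) p"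
        unfolding \<Phi>_def by (rule low_diff)
      also have "(\<lambda>p. (G p + bil N s Y1 Y1 p) - (G p + bil N s Y2 Y2 p)) = H"
        using HH by (auto simp: fun_eq_iff)
      finally show "\<Phi> Y1 p - \<Phi> Y2 p = low H p" .
    qed
    have symH: "symm N H" using bil_symm[of N s Y1] bil_symm[of N s Y2]
      unfolding symm_def HH by auto
    have "nf N (low H) \<le> nf N H / sqrt 2" by (rule low_bound[OF symH])
    also have "\<dots> \<le> (nf N Y1 * nf N D + nf N D * nf N Y2) / sqrt 2"
      unfolding H_def
      by (intro divide_right_mono order_trans[OF nf_triangle] add_mono bil_bound s) auto
    also have "\<dots> \<le> (r * nf N D + nf N D * r) / sqrt 2"
      by (intro divide_right_mono add_mono mult_mono h1 h2 nf_nonneg r0) auto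
    also have "\<dots> = (2 * r / sqrt 2) * nf N D" by (simp add: algebra_simps)
    finally show ?thesis unfolding eq D_def qr .
  qed
  define Yk where "Yk k = (\<Phi> ^^ k) (\<lambda>_. 0)" for k
  have YkS: "Yk (Suc k) = \<Phi> (Yk k)" for k unfolding Yk_def by simp
  have Yk_ball: "nf N (Yk k) \<le> r" for k
  proof (induction k)
    case 0 thus ?case using r0 by (simp add: Yk_def)
  next
    case (Suc k) thus ?case unfolding YkS by (rule ball)
  qed
  define C where "C = nf N (Yk 1)"
  have Yk_diff: "nf N (\<lambda>p. Yk (Suc k) p - Yk k p) \<le> C * q^k" for k
  proof (induction k)
    case 0 show ?case by (simp add: C_def Yk_def)
  next
    case (Suc k)
    have "nf N (\<lambda>p. Yk (Suc (Suc k)) p - Yk (Suc k) p) \<le> q * nf N (\<lambda>p. Yk (Suc k) p - Yk k p)"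
      unfolding YkS[of "Suc k"] unfolding YkS[of k] by (intro contr) (use Yk_ball[of "Suc k"] Yk_ball[of k] in \<open>simp_all add: YkS\<close>)
    also have "\<dots> \<le> q * (C * q^k)" by (intro mult_left_mono Suc q01)
    finally show ?case by (simp add: algebra_simps)
  qed
  have conv: "convergent (\<lambda>k. Yk k (i,j))" if ij: "i < N" "j < N" for i j
  proof (rule geom_conv[OF _ q01])
    fix k
    have "\<bar>(\<lambda>p. Yk (Suc k) p - Yk k p) (i,j)\<bar> \<le> nf N (\<lambda>p. Yk (Suc k) p - Yk k p)"
      by (rule nf_entry[OF ij])
    with Yk_diff[of k] show "\<bar>Yk (Suc k) (i, j) - Yk k (i, j)\<bar> \<le> C * q ^ k" by simp
  qed
  define Y where "Y p = lim (\<lambda>k. Yk k p)" for p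
  have lim: "(\<lambda>k. Yk k (i,j)) \<longlonglongrightarrow> Y (i,j)" if "i < N" "j < N" for i j
    using conv[OF that] unfolding Y_def by (simp add: convergent_LIMSEQ_iff)
  have limb: "(\<lambda>k. bil N s (Yk k) (Yk k) (i,j)) \<longlonglongrightarrow> bil N s Y Y (i,j)"
    if "i < N" "j < N" for i j
    unfolding bil_def using that by (auto intro!: tendsto_sum tendsto_mult lim)
  have limP: "(\<lambda>k. \<Phi> (Yk k) (i,j)) \<longlonglongrightarrow> \<Phi> Y (i,j)" if "i < N" "j < N" for i j
    unfolding \<Phi>_def low_def using that by (auto intro!: tendsto_add tendsto_divide limb)
  have fixY: "Y (i,j) = \<Phi> Y (i,j)" if "i < N" "j < N" for i j
  proof -
    have "(\<lambda>k. Yk (Suc k) (i,j)) \<longlonglongrightarrow> Y (i,j)"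
      using lim[OF that] by (rule LIMSEQ_Suc)
    moreover have "(\<lambda>k. Yk (Suc k) (i,j)) \<longlonglongrightarrow> \<Phi> Y (i,j)"
      unfolding YkS by (rule limP[OF that])
    ultimately show ?thesis by (rule LIMSEQ_unique)
  qed
  have limn: "(\<lambda>k. nf N (Yk k)) \<longlonglongrightarrow> nf N Y"
    unfolding nf_def L2_set_def
    by (intro tendsto_real_sqrt tendsto_sum tendsto_power) (auto intro: lim)
  have "nf N Y \<le> r"
    by (rule LIMSEQ_le_const2[OF limn]) (use Yk_ball in auto)
  thus ?thesis using fixY unfolding \<Phi>_def r_def t_def by blast
qed



lemma mult_entry: assumes "A \<in> carrier_mat a k" "B \<in> carrier_mat k b" "i < a" "j < b"
  shows "(A * B) $$ (i,j) = (\<Sum>l<k. A $$ (i,l) * B $$ (l,j))"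
  using assms by (simp add: scalar_prod_def row_def col_def atLeast0LessThan)

lemma frob_nf: assumes "A \<in> carrier_mat N N" shows "frob_norm A = nf N (\<lambda>p. A $$ p)"
proof -
  have "frob_norm A = sqrt ((nf N (\<lambda>p. A $$ p))\<^sup>2)"
    unfolding frob_norm_def nf_sq2 using assms by simp
  thus ?thesis using nf_nonneg by simp
qed

lemma nf_swap: "nf N (\<lambda>p. Y (snd p, fst p)) = nf N Y"
  unfolding nf_def L2_set_def using sum_swap_prod[where f="\<lambda>p. (Y p)\<^sup>2" and N=N] by simp

lemma nf_mult: assumes "A \<in> carrier_mat N N" "B \<in> carrier_mat N N"
  shows "nf N (\<lambda>p. (A * B) $$ p) \<le> nf N (\<lambda>p. A $$ p) * nf N (\<lambda>p. B $$ p)"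
proof -
  have "nf N (\<lambda>p. (A * B) $$ p) = nf N (bil N (\<lambda>_. 1) (\<lambda>p. A $$ p) (\<lambda>p. B $$ (snd p, fst p)))"
    by (rule nf_cong) (simp add: bil_def mult_entry[OF assms])
  also have "\<dots> \<le> nf N (\<lambda>p. A $$ p) * nf N (\<lambda>p. B $$ (snd p, fst p))"
    by (rule bil_bound) simp
  also have "nf N (\<lambda>p. B $$ (snd p, fst p)) = nf N (\<lambda>p. B $$ p)"
    by (rule nf_swap)
  finally show ?thesis .
qed

lemma nf_mono: assumes "\<And>i j. i < N \<Longrightarrow> j < N \<Longrightarrow> \<bar>A (i,j)\<bar> \<le> B (i,j)"
  shows "nf N A \<le> nf N B"
proof -
  have "nf N A = L2_set (\<lambda>p. \<bar>A p\<bar>) ({..<N} \<times> {..<N})" unfolding nf_def L2_set_def by simp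
  also have "\<dots> \<le> nf N B" unfolding nf_def by (rule L2_set_mono) (auto intro: assms)
  finally show ?thesis .
qed

lemma abs_mult_le: assumes "A \<in> carrier_mat a k" "B \<in> carrier_mat k b"
  shows "abs_mat (A * B) \<le> abs_mat A * abs_mat B"
  unfolding less_eq_mat_def
proof (intro conjI allI impI)
  fix i j assume ij: "i < dim_row (abs_mat A * abs_mat B)" "j < dim_col (abs_mat A * abs_mat B)"
  hence ij': "i < a" "j < b" using assms by (auto simp: abs_mat_def)
  have AA: "abs_mat A \<in> carrier_mat a k" "abs_mat B \<in> carrier_mat k b" using assms by (auto simp: abs_mat_def)
  have "abs_mat (A * B) $$ (i,j) = \<bar>(A * B) $$ (i,j)\<bar>"
    using assms ij' by (simp add: abs_mat_def)
  also have "\<dots> = \<bar>\<Sum>l<k. A $$ (i,l) * B $$ (l,j)\<bar>"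
    using mult_entry[OF assms ij'] by simp
  also have "\<dots> \<le> (\<Sum>l<k. \<bar>A $$ (i,l) * B $$ (l,j)\<bar>)" by (rule sum_abs)
  also have "\<dots> = (\<Sum>l<k. abs_mat A $$ (i,l) * abs_mat B $$ (l,j))"
    using assms ij' by (intro sum.cong) (auto simp: abs_mat_def abs_mult)
  also have "\<dots> = (abs_mat A * abs_mat B) $$ (i,j)" by (rule mult_entry[OF AA ij', symmetric])
  finally show "abs_mat (A * B) $$ (i,j) \<le> (abs_mat A * abs_mat B) $$ (i,j)" .
qed (simp_all add: abs_mat_def)

lemma mult_mono_l: fixes A B C :: "real mat" assumes A: "A \<in> carrier_mat a k" and nn: "\<And>i j. i < a \<Longrightarrow> j < k \<Longrightarrow> 0 \<le> A $$ (i,j)"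
  and B: "B \<in> carrier_mat k b" and C: "C \<in> carrier_mat k b" and BC: "B \<le> C"
  shows "A * B \<le> A * C"
  unfolding less_eq_mat_def
proof (intro conjI allI impI)
  fix i j assume ij: "i < dim_row (A * C)" "j < dim_col (A * C)"
  hence ij': "i < a" "j < b" using A C by auto
  have le: "B $$ (l,j) \<le> C $$ (l,j)" if "l < k" for l
    using BC that ij' B C unfolding less_eq_mat_def by auto
  show "(A * B) $$ (i,j) \<le> (A * C) $$ (i,j)"
    unfolding mult_entry[OF A B ij'] mult_entry[OF A C ij']
    by (rule sum_mono) (auto intro!: mult_left_mono le nn ij')
qed (use A B C in simp_all)

lemma mult_mono_r: fixes A B C :: "real mat" assumes A: "A \<in> carrier_mat k b" and nn: "\<And>i j. i < k \<Longrightarrow> j < b \<Longrightarrow> 0 \<le> A $$ (i,j)"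
  and B: "B \<in> carrier_mat a k" and C: "C \<in> carrier_mat a k" and BC: "B \<le> C"
  shows "B * A \<le> C * A"
  unfolding less_eq_mat_def
proof (intro conjI allI impI)
  fix i j assume ij: "i < dim_row (C * A)" "j < dim_col (C * A)"
  hence ij': "i < a" "j < b" using A C by auto
  have le: "B $$ (i,l) \<le> C $$ (i,l)" if "l < k" for l
    using BC that ij' B C unfolding less_eq_mat_def by auto
  show "(B * A) $$ (i,j) \<le> (C * A) $$ (i,j)"
    unfolding mult_entry[OF B A ij'] mult_entry[OF C A ij']
    by (rule sum_mono) (auto intro!: mult_right_mono le nn ij')
qed (use A B C in simp_all)

lemma abs_mat_carrier[simp]: "(abs_mat A \<in> carrier_mat a b) = (A \<in> carrier_mat a b)"
  unfolding abs_mat_def carrier_mat_def by simp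

lemma abs_mat_nn: "i < dim_row A \<Longrightarrow> j < dim_col A \<Longrightarrow> 0 \<le> abs_mat A $$ (i,j)"
  unfolding abs_mat_def by simp

lemma inv_exists: fixes A :: "real mat" assumes A: "A \<in> carrier_mat N N" and d: "det A \<noteq> 0"
  shows "\<exists>B. B \<in> carrier_mat N N \<and> A * B = 1\<^sub>m N \<and> B * A = 1\<^sub>m N"
proof -
  have "A \<in> Units (ring_mat TYPE(real) N (undefined::unit))"
    by (rule det_non_zero_imp_unit[OF A d])
  then obtain B where "B \<in> carrier (ring_mat TYPE(real) N (undefined::unit))"
    "B \<otimes>\<^bsub>ring_mat TYPE(real) N (undefined::unit)\<^esub> A = \<one>\<^bsub>ring_mat TYPE(real) N (undefined::unit)\<^esub>"
    "A \<otimes>\<^bsub>ring_mat TYPE(real) N (undefined::unit)\<^esub> B = \<one>\<^bsub>ring_mat TYPE(real) N (undefined::unit)\<^esub>"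
    unfolding Units_def by blast
  thus ?thesis unfolding ring_mat_simps by blast
qed

lemma inv_unique: fixes A B C :: "real mat" assumes "A \<in> carrier_mat N N" "B \<in> carrier_mat N N" "C \<in> carrier_mat N N"
  "B * A = 1\<^sub>m N" "A * C = 1\<^sub>m N" shows "C = B"
proof -
  have "C = (B * A) * C" by (simp only: assms(4) left_mult_one_mat[OF assms(3)])
  also have "\<dots> = B * (A * C)" by (rule assoc_mult_mat[OF assms(2,1,3)])
  also have "\<dots> = B" by (simp only: assms(5) right_mult_one_mat[OF assms(2)])
  finally show ?thesis .
qed

lemma mat_inv_eq: assumes A: "A \<in> carrier_mat N N" and B: "B \<in> carrier_mat N N"
  and AB: "A * B = 1\<^sub>m N" and BA: "B * A = 1\<^sub>m N"
  shows "mat_inv A = B"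
proof -
  let ?P = "\<lambda>B. B \<in> carrier_mat (dim_row A) (dim_row A) \<and> inverts_mat A B \<and> inverts_mat B A"
  have "?P B" using A B AB BA unfolding inverts_mat_def by auto
  hence "?P (mat_inv A)" unfolding mat_inv_def by (rule someI)
  hence C: "mat_inv A \<in> carrier_mat N N" "A * mat_inv A = 1\<^sub>m N"
    using A unfolding inverts_mat_def by auto
  show ?thesis by (rule inv_unique[OF A B C(1) BA C(2)])
qed



definition sJ :: "nat \<Rightarrow> nat \<Rightarrow> real" where "sJ m l = (if l < m then 1 else -1)"

lemma sJ_abs: "\<bar>sJ m l\<bar> = 1" by (simp add: sJ_def)
lemma sJ_sq: "sJ m l * sJ m l = 1" by (simp add: sJ_def)

definition dmat :: "nat \<Rightarrow> (nat \<Rightarrow> real) \<Rightarrow> real mat" where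
  "dmat N d = mat N N (\<lambda>(i,j). if i = j then d i else 0)"

lemma Jmat_eq: "Jmat m n = dmat (m+n) (sJ m)"
  by (rule eq_matI) (auto simp: Jmat_def sJ_def dmat_def)

lemma Jmat_carrier: "Jmat m n \<in> carrier_mat (m+n) (m+n)"
  by (simp add: Jmat_eq dmat_def)

lemma dmat_right: assumes "A \<in> carrier_mat a N" "i < a" "j < N"
  shows "(A * dmat N d) $$ (i,j) = A $$ (i,j) * d j"
proof -
  have D: "dmat N d \<in> carrier_mat N N" by (simp add: dmat_def)
  have "(A * dmat N d) $$ (i,j) = (\<Sum>l<N. A $$ (i,l) * dmat N d $$ (l,j))"
    by (rule mult_entry[OF assms(1) D assms(2,3)])
  also have "\<dots> = (\<Sum>l<N. if l = j then A $$ (i,j) * d j else 0)"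
    using assms(3) by (intro sum.cong) (auto simp: dmat_def)
  also have "\<dots> = A $$ (i,j) * d j" using assms(3) by simp
  finally show ?thesis .
qed

lemma dmat_left: assumes "A \<in> carrier_mat N b" "i < N" "j < b"
  shows "(dmat N d * A) $$ (i,j) = d i * A $$ (i,j)"
proof -
  have D: "dmat N d \<in> carrier_mat N N" by (simp add: dmat_def)
  have "(dmat N d * A) $$ (i,j) = (\<Sum>l<N. dmat N d $$ (i,l) * A $$ (l,j))"
    by (rule mult_entry[OF D assms(1) assms(2,3)])
  also have "\<dots> = (\<Sum>l<N. if l = i then d i * A $$ (i,j) else 0)"
    using assms(2) by (intro sum.cong) (auto simp: dmat_def)
  also have "\<dots> = d i * A $$ (i,j)" using assms(2) by simp
  finally show ?thesis .
qed

lemma JJ: "Jmat m n * Jmat m n = 1\<^sub>m (m+n)"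
proof (rule eq_matI)
  fix i j assume ij: "i < dim_row (1\<^sub>m (m+n))" "j < dim_col (1\<^sub>m (m+n))"
  hence ij': "i < m+n" "j < m+n" by auto
  show "(Jmat m n * Jmat m n) $$ (i,j) = 1\<^sub>m (m+n) $$ (i,j)"
    unfolding Jmat_eq using ij' dmat_left[of "dmat (m+n) (sJ m)" "m+n" "m+n" i j "sJ m"]
    by (auto simp: dmat_def sJ_def)
qed (auto simp: Jmat_eq dmat_def)

lemma JT: "transpose_mat (Jmat m n) = Jmat m n"
  by (rule eq_matI) (auto simp: Jmat_eq dmat_def)

definition ltri :: "nat \<Rightarrow> real mat \<Rightarrow> bool" where
  "ltri N A \<longleftrightarrow> (\<forall>i<N. \<forall>j<N. i < j \<longrightarrow> A $$ (i,j) = 0)"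

lemma ltri_mult: assumes A: "A \<in> carrier_mat N N" and B: "B \<in> carrier_mat N N"
  and lA: "ltri N A" and lB: "ltri N B" shows "ltri N (A * B)"
  unfolding ltri_def
proof (intro allI impI)
  fix i j assume ij: "i < N" "j < N" "i < j"
  have "(A * B) $$ (i,j) = (\<Sum>l<N. A $$ (i,l) * B $$ (l,j))"
    by (rule mult_entry[OF A B ij(1,2)])
  also have "\<dots> = 0"
  proof (rule sum.neutral, intro ballI)
    fix l assume l: "l \<in> {..<N}"
    show "A $$ (i,l) * B $$ (l,j) = 0"
    proof (cases "i < l")
      case True thus ?thesis using lA l ij unfolding ltri_def by auto
    next
      case False thus ?thesis using lB l ij unfolding ltri_def by auto
    qed
  qed
  finally show "(A * B) $$ (i,j) = 0" .
qed

lemma ltri_diag_mult: assumes A: "A \<in> carrier_mat N N" and B: "B \<in> carrier_mat N N"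
  and lA: "ltri N A" and lB: "ltri N B" and i: "i < N"
  shows "(A * B) $$ (i,i) = A $$ (i,i) * B $$ (i,i)"
proof -
  have "(A * B) $$ (i,i) = (\<Sum>l<N. A $$ (i,l) * B $$ (l,i))"
    by (rule mult_entry[OF A B i i])
  also have "\<dots> = (\<Sum>l<N. if l = i then A $$ (i,i) * B $$ (i,i) else 0)"
  proof (rule sum.cong)
    fix l assume l: "l \<in> {..<N}"
    consider "l = i" | "i < l" | "l < i" by linarith
    thus "A $$ (i,l) * B $$ (l,i) = (if l = i then A $$ (i,i) * B $$ (i,i) else 0)"
      by cases (use lA lB l i in \<open>auto simp: ltri_def\<close>)
  qed simp
  also have "\<dots> = A $$ (i,i) * B $$ (i,i)" using i by simp
  finally show ?thesis .
qed

lemma prod_list_diag_nz: assumes "prod_list (diag_mat (A::real mat)) \<noteq> 0" "i < dim_row A"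
  shows "A $$ (i,i) \<noteq> 0"
  using assms by (auto simp: prod_list_zero_iff diag_mat_def)

lemma gcf_imp: assumes "gen_chol_factor m n L"
  shows "L \<in> carrier_mat (m+n) (m+n) \<and> ltri (m+n) L \<and> (\<forall>i<m+n. L $$ (i,i) \<noteq> 0)"
proof -
  obtain L11 L21 L22 where c: "L11 \<in> carrier_mat m m" "L21 \<in> carrier_mat n m" "L22 \<in> carrier_mat n n"
    and lt: "lower_tri L11" "lower_tri L22" and d: "det L11 \<noteq> 0" "det L22 \<noteq> 0"
    and L: "L = four_block_mat L11 (0\<^sub>m m n) L21 L22" and Lc: "L \<in> carrier_mat (m+n) (m+n)"
    using assms unfolding gen_chol_factor_def by blast
  have lt11: "\<And>i j. i < j \<Longrightarrow> j < m \<Longrightarrow> L11 $$ (i,j) = 0" using lt(1) c(1) unfolding lower_tri_def by auto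
  have lt22: "\<And>i j. i < j \<Longrightarrow> j < n \<Longrightarrow> L22 $$ (i,j) = 0" using lt(2) c(3) unfolding lower_tri_def by auto
  have p11: "prod_list (diag_mat L11) \<noteq> 0" using d(1) det_lower_triangular[OF lt11 c(1)] by simp
  have p22: "prod_list (diag_mat L22) \<noteq> 0" using d(2) det_lower_triangular[OF lt22 c(3)] by simp
  have "ltri (m+n) L" unfolding ltri_def
  proof (intro allI impI)
    fix i j assume ij: "i < m+n" "j < m+n" "i < j"
    show "L $$ (i,j) = 0" unfolding L using ij c lt11 lt22 by auto
  qed
  moreover have "L $$ (i,i) \<noteq> 0" if i: "i < m+n" for i
  proof (cases "i < m")
    case True
    hence "L $$ (i,i) = L11 $$ (i,i)" unfolding L using c i by auto
    thus ?thesis using prod_list_diag_nz[OF p11] True c by auto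
  next
    case False
    hence "L $$ (i,i) = L22 $$ (i-m,i-m)" unfolding L using c i by auto
    thus ?thesis using prod_list_diag_nz[OF p22, of "i-m"] False c i by auto
  qed
  ultimately show ?thesis using Lc by blast
qed

lemma gcf_intro: assumes Lc: "L \<in> carrier_mat (m+n) (m+n)" and lt: "ltri (m+n) L"
  and dg: "\<And>i. i < m+n \<Longrightarrow> L $$ (i,i) \<noteq> 0"
  shows "gen_chol_factor m n L"
proof -
  define L11 where "L11 = mat m m (\<lambda>(i,j). L $$ (i,j))"
  define L21 where "L21 = mat n m (\<lambda>(i,j). L $$ (i+m,j))"
  define L22 where "L22 = mat n n (\<lambda>(i,j). L $$ (i+m,j+m))"
  have c: "L11 \<in> carrier_mat m m" "L21 \<in> carrier_mat n m" "L22 \<in> carrier_mat n n"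
    unfolding L11_def L21_def L22_def by auto
  have eq: "L = four_block_mat L11 (0\<^sub>m m n) L21 L22"
  proof (rule eq_matI)
    fix i j assume ij: "i < dim_row (four_block_mat L11 (0\<^sub>m m n) L21 L22)"
      "j < dim_col (four_block_mat L11 (0\<^sub>m m n) L21 L22)"
    hence ij': "i < m+n" "j < m+n" using c by auto
    show "L $$ (i,j) = four_block_mat L11 (0\<^sub>m m n) L21 L22 $$ (i,j)"
      using ij' c lt unfolding L11_def L21_def L22_def ltri_def by auto
  qed (use Lc c in auto)
  have lt11: "\<And>i j. i < j \<Longrightarrow> j < m \<Longrightarrow> L11 $$ (i,j) = 0"
    using lt unfolding L11_def ltri_def by auto
  have lt22: "\<And>i j. i < j \<Longrightarrow> j < n \<Longrightarrow> L22 $$ (i,j) = 0"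
    using lt unfolding L22_def ltri_def by auto
  have "det L11 = prod_list (diag_mat L11)" by (rule det_lower_triangular[OF lt11 c(1)])
  also have "\<dots> \<noteq> 0" using dg unfolding L11_def by (auto simp: prod_list_zero_iff diag_mat_def)
  finally have d1: "det L11 \<noteq> 0" .
  have "det L22 = prod_list (diag_mat L22)" by (rule det_lower_triangular[OF lt22 c(3)])
  also have "\<dots> \<noteq> 0" using dg unfolding L22_def by (auto simp: prod_list_zero_iff diag_mat_def)
  finally have d2: "det L22 \<noteq> 0" .
  have "lower_tri L11" "lower_tri L22" using lt11 lt22 c unfolding lower_tri_def by auto
  thus ?thesis unfolding gen_chol_factor_def using Lc c d1 d2 eq by blast
qed



theorem mainTheorem4:
  fixes m n :: nat and K dK Lt :: "real mat" and \<epsilon> :: real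
  assumes "K \<in> carrier_mat (m+n) (m+n)" and "dK \<in> carrier_mat (m+n) (m+n)"
    and "transpose_mat K = K" and "transpose_mat dK = dK"
    and "is_gen_chol m n (K + dK) Lt"
    and "abs_mat dK \<le> \<epsilon> \<cdot>\<^sub>m (abs_mat Lt * abs_mat (transpose_mat Lt))"
    and "\<epsilon> \<ge> 0"
    and "condF Lt * condF (transpose_mat (mat_inv Lt)) * \<epsilon> < 1/2"
  shows "\<exists>L. is_gen_chol m n K L \<and>
           frob_norm (mat_inv Lt * (Lt - L))
             \<le> (1 / sqrt 2) * (1 - sqrt (1 - 2 * condF Lt * condF (transpose_mat (mat_inv Lt)) * \<epsilon>))"
proof -
  define N where "N = m + n"
  define J where "J = Jmat m n"
  have Kc: "K \<in> carrier_mat N N" and dKc: "dK \<in> carrier_mat N N" using assms(1,2) N_def by auto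
  have Jc: "J \<in> carrier_mat N N" unfolding J_def N_def by (rule Jmat_carrier)
  have gLt: "gen_chol_factor m n Lt" and KdK: "K + dK = Lt * J * transpose_mat Lt"
    using assms(5) unfolding is_gen_chol_def J_def by auto
  have Ltc: "Lt \<in> carrier_mat N N" and ltLt: "ltri N Lt" and dLt: "\<And>i. i < N \<Longrightarrow> Lt $$ (i,i) \<noteq> 0"
    using gcf_imp[OF gLt] unfolding N_def by auto
  have lt': "\<And>i j. i < j \<Longrightarrow> j < N \<Longrightarrow> Lt $$ (i,j) = 0" using ltLt unfolding ltri_def by auto
  have "det Lt = prod_list (diag_mat Lt)" by (rule det_lower_triangular[OF lt' Ltc])
  also have "\<dots> \<noteq> 0" using dLt Ltc by (auto simp: prod_list_zero_iff diag_mat_def)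
  finally have detLt: "det Lt \<noteq> 0" .
  obtain Ainv where Ac: "Ainv \<in> carrier_mat N N" and LA: "Lt * Ainv = 1\<^sub>m N" and AL: "Ainv * Lt = 1\<^sub>m N"
    using inv_exists[OF Ltc detLt] by blast
  have invLt: "mat_inv Lt = Ainv" by (rule mat_inv_eq[OF Ltc Ac LA AL])
  define AT where "AT = transpose_mat Ainv"
  have ATc: "AT \<in> carrier_mat N N" using Ac unfolding AT_def by simp
  have LTc: "transpose_mat Lt \<in> carrier_mat N N" using Ltc by simp
  have ATLT: "AT * transpose_mat Lt = 1\<^sub>m N"
    unfolding AT_def using transpose_mult[OF Ltc Ac] LA by simp
  have LTAT: "transpose_mat Lt * AT = 1\<^sub>m N"
    unfolding AT_def using transpose_mult[OF Ac Ltc] AL by simp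
  have invAT: "mat_inv AT = transpose_mat Lt" by (rule mat_inv_eq[OF ATc LTc ATLT LTAT])
  define c1 where "c1 = condF Lt"
  define c2 where "c2 = condF AT"
  define g where "g = c1 * c2 * \<epsilon>"
  have hyp8: "g < 1/2" using assms(8) unfolding g_def c1_def c2_def AT_def invLt .
  define P where "P = abs_mat Ainv * abs_mat Lt"
  define Q where "Q = abs_mat (transpose_mat Lt) * abs_mat AT"
  have Pc: "P \<in> carrier_mat N N" unfolding P_def using Ac Ltc by auto
  have Qc: "Q \<in> carrier_mat N N" unfolding Q_def using ATc LTc by auto
  have c1P: "c1 = nf N (\<lambda>p. P $$ p)" unfolding c1_def condF_def invLt P_def[symmetric]
    by (rule frob_nf[OF Pc])
  have c2Q: "c2 = nf N (\<lambda>p. Q $$ p)" unfolding c2_def condF_def invAT Q_def[symmetric]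
    by (rule frob_nf[OF Qc])
  have c1nn: "0 \<le> c1" and c2nn: "0 \<le> c2" unfolding c1P c2Q by (auto simp: nf_nonneg)
  have g0: "0 \<le> g" unfolding g_def using c1nn c2nn assms(7) by simp
  define Gm where "Gm = Ainv * dK * AT"
  have Gc: "Gm \<in> carrier_mat N N" unfolding Gm_def using Ac dKc ATc by auto
  have GT: "transpose_mat Gm = Gm"
  proof -
    have "transpose_mat Gm = transpose_mat AT * transpose_mat (Ainv * dK)"
      unfolding Gm_def by (rule transpose_mult[of _ N N]) (use Ac dKc ATc in auto)
    also have "\<dots> = Ainv * (transpose_mat dK * AT)"
      unfolding AT_def by (subst transpose_mult[OF Ac dKc]) simp
    also have "\<dots> = Gm" unfolding Gm_def assms(4)
      by (rule assoc_mult_mat[symmetric, OF Ac dKc ATc])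
    finally show ?thesis .
  qed
  define G where "G = (\<lambda>p. Gm $$ p)"
  have symG: "symm N G" unfolding symm_def G_def
  proof (intro allI impI)
    fix i j assume "i < N" "j < N"
    hence "transpose_mat Gm $$ (j,i) = Gm $$ (i,j)" using Gc by simp
    thus "Gm $$ (i,j) = Gm $$ (j,i)" using GT by simp
  qed
  have aAc: "abs_mat Ainv \<in> carrier_mat N N" and aLc: "abs_mat Lt \<in> carrier_mat N N"
    and aLTc: "abs_mat (transpose_mat Lt) \<in> carrier_mat N N" and aATc: "abs_mat AT \<in> carrier_mat N N"
    and adKc: "abs_mat dK \<in> carrier_mat N N" and aADc: "abs_mat (Ainv * dK) \<in> carrier_mat N N"
    using Ac Ltc ATc dKc by auto
  have nnA: "\<And>i j. i < N \<Longrightarrow> j < N \<Longrightarrow> 0 \<le> abs_mat Ainv $$ (i,j)"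
    and nnAT: "\<And>i j. i < N \<Longrightarrow> j < N \<Longrightarrow> 0 \<le> abs_mat AT $$ (i,j)"
    using Ac ATc by (auto simp: abs_mat_def)
  define E where "E = \<epsilon> \<cdot>\<^sub>m (abs_mat Lt * abs_mat (transpose_mat Lt))"
  have Ec: "E \<in> carrier_mat N N" unfolding E_def using aLc aLTc by auto
  have "abs_mat Gm \<le> abs_mat (Ainv * dK) * abs_mat AT"
    unfolding Gm_def by (rule abs_mult_le[of _ N N]) (use Ac dKc ATc in auto)
  also have "\<dots> \<le> (abs_mat Ainv * abs_mat dK) * abs_mat AT"
    by (rule mult_mono_r[OF aATc nnAT aADc _ abs_mult_le[OF Ac dKc]]) (use aAc adKc in auto)
  also have "\<dots> \<le> (abs_mat Ainv * E) * abs_mat AT"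
    by (rule mult_mono_r[OF aATc nnAT _ _ mult_mono_l[OF aAc nnA adKc Ec]])
       (use aAc adKc Ec assms(6) E_def in auto)
  also have "\<dots> = \<epsilon> \<cdot>\<^sub>m (P * Q)"
  proof -
    have "abs_mat Ainv * E = \<epsilon> \<cdot>\<^sub>m (abs_mat Ainv * (abs_mat Lt * abs_mat (transpose_mat Lt)))"
      unfolding E_def by (rule mult_smult_distrib[OF aAc]) (use aLc aLTc in auto)
    hence "(abs_mat Ainv * E) * abs_mat AT
       = \<epsilon> \<cdot>\<^sub>m ((abs_mat Ainv * (abs_mat Lt * abs_mat (transpose_mat Lt))) * abs_mat AT)"
      using mult_smult_assoc_mat[of "abs_mat Ainv * (abs_mat Lt * abs_mat (transpose_mat Lt))" N N "abs_mat AT" N \<epsilon>]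
        aAc aLc aLTc aATc by auto
    also have "(abs_mat Ainv * (abs_mat Lt * abs_mat (transpose_mat Lt))) * abs_mat AT = P * Q"
      unfolding P_def Q_def
      using aAc aLc aLTc aATc by (simp add: assoc_mult_mat[of _ N N _ N _ N])
    finally show ?thesis .
  qed
  finally have GPQ: "abs_mat Gm \<le> \<epsilon> \<cdot>\<^sub>m (P * Q)" .
  have "nf N G \<le> nf N (\<lambda>p. \<epsilon> * (P * Q) $$ p)"
  proof (rule nf_mono)
    fix i j assume ij: "i < N" "j < N"
    have "abs_mat Gm $$ (i,j) \<le> (\<epsilon> \<cdot>\<^sub>m (P * Q)) $$ (i,j)"
      using GPQ ij Gc unfolding less_eq_mat_def by auto
    thus "\<bar>G (i,j)\<bar> \<le> \<epsilon> * (P * Q) $$ (i,j)" using ij Gc Pc Qc by (simp add: G_def abs_mat_def)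
  qed
  also have "\<dots> = \<epsilon> * nf N (\<lambda>p. (P * Q) $$ p)"
    unfolding nf_def by (rule L2_set_right_distrib[symmetric, OF assms(7)])
  also have "\<dots> \<le> \<epsilon> * (c1 * c2)"
    unfolding c1P c2Q by (rule mult_left_mono[OF nf_mult[OF Pc Qc] assms(7)])
  finally have Gb: "nf N G \<le> g" unfolding g_def by (simp add: algebra_simps)
  define r where "r = (1 - sqrt (1 - 2*g)) / sqrt 2"
  obtain Y where Yfix: "\<And>i j. i < N \<Longrightarrow> j < N \<Longrightarrow> Y (i,j) = low (\<lambda>p. G p + bil N (sJ m) Y Y p) (i,j)"
    and nfY: "nf N Y \<le> r"
    using fixed_point[OF symG Gb g0 hyp8, of "sJ m"] sJ_abs unfolding r_def by blast

  have Yup: "Y (i,j) = 0" if "i < j" "j < N" for i j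
    using Yfix[of i j] that by (simp add: low_def)
  have Ysum: "Y (i,j) + Y (j,i) = G (i,j) + bil N (sJ m) Y Y (i,j)" if ij: "i < N" "j < N" for i j
  proof -
    have sB: "bil N (sJ m) Y Y (j,i) = bil N (sJ m) Y Y (i,j)"
      using bil_symm[of N "sJ m" Y] ij unfolding symm_def by auto
    have sG: "G (j,i) = G (i,j)" using symG ij unfolding symm_def by auto
    consider "j < i" | "i = j" | "i < j" by linarith
    thus ?thesis
    proof cases
      case 1 thus ?thesis using Yfix[of i j] Yfix[of j i] ij by (simp add: low_def)
    next
      case 2 thus ?thesis using Yfix[of i j] ij by (simp add: low_def)
    next
      case 3 thus ?thesis using Yfix[of i j] Yfix[of j i] ij sB sG by (simp add: low_def)
    qed
  qed
  have r1: "r < 1"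
  proof -
    have "sqrt (1 - 2*g) \<ge> 0" using hyp8 by simp
    hence "r \<le> 1 / sqrt 2" unfolding r_def by (simp add: divide_right_mono)
    also have "1 / sqrt 2 < (1::real)" by simp
    finally show ?thesis .
  qed
  have Ydiag: "\<bar>Y (i,i)\<bar> < 1" if "i < N" for i
    using nf_entry[OF that that, of Y] nfY r1 by linarith
  define Ym where "Ym = mat N N Y"
  have Ymc: "Ym \<in> carrier_mat N N" unfolding Ym_def by simp
  have YTc: "transpose_mat Ym \<in> carrier_mat N N" using Ymc by simp
  define X where "X = Ym * J"
  have Xc: "X \<in> carrier_mat N N" unfolding X_def using Ymc Jc by auto
  have Xent: "X $$ (i,j) = Y (i,j) * sJ m j" if "i < N" "j < N" for i j
    unfolding X_def J_def Jmat_eq N_def[symmetric] using dmat_right[OF Ymc that] that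
    by (simp add: Ym_def)
  define B where "B = Ym * J * transpose_mat Ym"
  have Bc: "B \<in> carrier_mat N N" unfolding B_def using Ymc Jc by auto
  have Bent: "B $$ (i,j) = bil N (sJ m) Y Y (i,j)" if ij: "i < N" "j < N" for i j
  proof -
    have "B $$ (i,j) = (\<Sum>l<N. X $$ (i,l) * transpose_mat Ym $$ (l,j))"
      unfolding B_def X_def[symmetric] by (rule mult_entry[OF Xc YTc ij])
    also have "\<dots> = bil N (sJ m) Y Y (i,j)"
      unfolding bil_def using ij by (auto intro!: sum.cong simp: Xent Ym_def)
    finally show ?thesis .
  qed
  define M where "M = 1\<^sub>m N - X"
  have Mc: "M \<in> carrier_mat N N" unfolding M_def using Xc by auto
  have one: "1\<^sub>m N \<in> carrier_mat N N" by simp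
  have JJ': "J * J = 1\<^sub>m N" unfolding J_def N_def by (rule JJ)
  have JT': "transpose_mat J = J" unfolding J_def by (rule JT)
  have MJ: "M * J = J - Ym"
  proof -
    have "M * J = 1\<^sub>m N * J - X * J" unfolding M_def by (rule minus_mult_distrib_mat[OF one Xc Jc])
    also have "X * J = Ym * (J * J)" unfolding X_def by (rule assoc_mult_mat[OF Ymc Jc Jc])
    also have "\<dots> = Ym" unfolding JJ' using Ymc by simp
    finally show ?thesis using Jc by simp
  qed
  have MT: "transpose_mat M = 1\<^sub>m N - J * transpose_mat Ym"
  proof -
    have "transpose_mat M = transpose_mat (1\<^sub>m N) - transpose_mat X" unfolding M_def by (rule transpose_minus[OF one Xc])
    also have "transpose_mat X = J * transpose_mat Ym" unfolding X_def transpose_mult[OF Ymc Jc] JT' ..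
    finally show ?thesis by simp
  qed
  have MJM: "M * J * transpose_mat M = J - Gm"
  proof -
    have JYc: "J * transpose_mat Ym \<in> carrier_mat N N" using Jc YTc by auto
    have "M * J * transpose_mat M = (J - Ym) * (1\<^sub>m N - J * transpose_mat Ym)" unfolding MJ MT ..
    also have "\<dots> = (J - Ym) * 1\<^sub>m N - (J - Ym) * (J * transpose_mat Ym)"
      by (rule mult_minus_distrib_mat[of _ N N]) (use Jc Ymc JYc in auto)
    also have "(J - Ym) * (J * transpose_mat Ym) = J * (J * transpose_mat Ym) - Ym * (J * transpose_mat Ym)"
      by (rule minus_mult_distrib_mat[OF Jc Ymc JYc])
    also have "J * (J * transpose_mat Ym) = transpose_mat Ym"
      using assoc_mult_mat[OF Jc Jc YTc] JJ' YTc by simp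
    also have "Ym * (J * transpose_mat Ym) = B"
      unfolding B_def by (rule assoc_mult_mat[symmetric, OF Ymc Jc YTc])
    also have "(J - Ym) * 1\<^sub>m N = J - Ym" using Jc Ymc by simp
    finally have e: "M * J * transpose_mat M = J - Ym - (transpose_mat Ym - B)" .
    show ?thesis unfolding e
    proof (rule eq_matI)
      fix i j assume "i < dim_row (J - Gm)" "j < dim_col (J - Gm)"
      hence ij: "i < N" "j < N" using Jc Gc by auto
      show "(J - Ym - (transpose_mat Ym - B)) $$ (i,j) = (J - Gm) $$ (i,j)"
        using ij Jc Ymc Bc Gc Ysum[OF ij] Bent[OF ij] by (simp add: Ym_def G_def)
    qed (use Jc Gc Ymc Bc in auto)
  qed
  define L where "L = Lt * M"
  have Lc: "L \<in> carrier_mat N N" unfolding L_def using Ltc Mc by auto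
  have LJL: "L * J * transpose_mat L = K"
  proof -
    have "L * J * transpose_mat L = Lt * M * J * (transpose_mat M * transpose_mat Lt)"
      unfolding L_def transpose_mult[OF Ltc Mc] ..
    also have "\<dots> = Lt * (M * J * transpose_mat M) * transpose_mat Lt"
      using Ltc Mc Jc LTc by (simp add: assoc_mult_mat[of _ N N _ N _ N])
    also have "\<dots> = Lt * (J - Gm) * transpose_mat Lt" unfolding MJM ..
    also have "Lt * (J - Gm) = Lt * J - Lt * Gm" by (rule mult_minus_distrib_mat[OF Ltc Jc Gc])
    also have "(Lt * J - Lt * Gm) * transpose_mat Lt = Lt * J * transpose_mat Lt - Lt * Gm * transpose_mat Lt"
      by (rule minus_mult_distrib_mat[of _ N N]) (use Ltc Jc Gc LTc in auto)
    also have "Lt * Gm * transpose_mat Lt = dK"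
    proof -
      have "Lt * Gm * transpose_mat Lt = (Lt * Ainv) * dK * (AT * transpose_mat Lt)"
        unfolding Gm_def using Ltc Ac dKc ATc LTc by (simp add: assoc_mult_mat[of _ N N _ N _ N])
      thus ?thesis unfolding LA ATLT using dKc by simp
    qed
    also have "Lt * J * transpose_mat Lt = K + dK" using KdK ..
    finally have e: "L * J * transpose_mat L = K + dK - dK" .
    show ?thesis unfolding e by (rule eq_matI) (use Kc dKc in auto)
  qed
  have ltM: "ltri N M" unfolding ltri_def
  proof (intro allI impI)
    fix i j assume ij: "i < N" "j < N" "i < j"
    thus "M $$ (i,j) = 0" unfolding M_def using Xc Xent[of i j] Yup[of i j] by simp
  qed
  have dM: "M $$ (i,i) \<noteq> 0" if i: "i < N" for i
  proof -
    have "M $$ (i,i) = 1 - Y (i,i) * sJ m i" unfolding M_def using Xc Xent[OF i i] i by simp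
    moreover have "\<bar>Y (i,i) * sJ m i\<bar> < 1" using Ydiag[OF i] by (simp add: abs_mult sJ_abs)
    ultimately show ?thesis by auto
  qed
  have ltL: "ltri N L" unfolding L_def by (rule ltri_mult[OF Ltc Mc ltLt ltM])
  have dL: "L $$ (i,i) \<noteq> 0" if i: "i < N" for i
    unfolding L_def ltri_diag_mult[OF Ltc Mc ltLt ltM i] using dLt[OF i] dM[OF i] by simp
  have gL: "gen_chol_factor m n L" by (rule gcf_intro[OF Lc[unfolded N_def] ltL[unfolded N_def] dL[unfolded N_def]])
  have AX: "Ainv * (Lt - L) = X"
  proof -
    have "Ainv * (Lt - L) = Ainv * Lt - Ainv * (Lt * M)" unfolding L_def
      by (rule mult_minus_distrib_mat[OF Ac Ltc]) (use Ltc Mc in auto)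
    also have "Ainv * (Lt * M) = M" using assoc_mult_mat[OF Ac Ltc Mc] AL Mc by simp
    finally have e: "Ainv * (Lt - L) = 1\<^sub>m N - M" unfolding AL .
    show ?thesis unfolding e M_def by (rule eq_matI) (use Xc in auto)
  qed
  have "frob_norm X = nf N (\<lambda>p. X $$ p)" by (rule frob_nf[OF Xc])
  also have "\<dots> \<le> nf N (\<lambda>p. \<bar>Y p\<bar>)"
    by (rule nf_mono) (simp add: Xent abs_mult sJ_abs)
  also have "nf N (\<lambda>p. \<bar>Y p\<bar>) = nf N Y" unfolding nf_def L2_set_def by simp
  finally have fb: "frob_norm X \<le> r" using nfY by simp
  have rr: "r = (1 / sqrt 2) * (1 - sqrt (1 - 2 * condF Lt * condF (transpose_mat (mat_inv Lt)) * \<epsilon>))"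
    unfolding r_def g_def c1_def c2_def AT_def invLt by (simp add: mult.assoc)
  show ?thesis
    by (rule exI[of _ L]) (use gL LJL fb AX rr in \<open>simp add: is_gen_chol_def J_def invLt\<close>)
qed


end
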